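(* In the setting described in the context, suppose the degree marginal of $P$ has positive variance and $\widetilde{\mathrm{E}}[\theta]=\mathrm{E}[\theta]$. Then $x^{friend}(\theta_i,d_i)>x^{soc}(\theta_i,d_i)$ for all $(\theta_i,d_i)\in\Theta\times D$, and moreover $$\widetilde{\mathrm{E}}[x^{friend}(\theta,d)]>\mathrm{E}[x^{friend}(\theta,d)]>\mathrm{E}[x^{soc}(\theta,d)].$$
   Context: Fix an integer $n\ge 2$, parameters $a>0$, $c>0$, $\phi\in\mathbb{R}$, and a compact set $\Theta\subset[0,\infty)$ of types. Let $D=\{1,\dots,n-1\}$. Let $P$ be a probability distribution on $\Theta\times D$, the joint distribution of the type $\theta$ and degree $d$ of a generic potential neighbor, the same for every agent; $\mathrm{E}$ denotes expectation under $P$. The neighbor distribution $\widetilde P$ is defined by $\widetilde P(A\times\{d\})=\frac{d}{\mathrm{E}[d]}P(A\times\{d\})$, with expectation $\widetilde{\mathrm{E}}$, i.e. $\widetilde{\mathrm{E}}[h(\theta,d)]=\mathrm{E}[d\,h(\theta,d)]/\mathrm{E}[d]$. Standing assumptions: $P(\theta>0)>0$ and $c>a\,\widetilde{\mathrm{E}}[d]$. A strategy is a bounded measurable $x:\Theta\times D\to[0,\infty)$, used by all agents. If others use $x$, an agent of type $\theta_i$, degree $d_i$, choosing $y\ge0$ gets in the society-wide game $EU^{soc}(y;\theta_i,d_i;x)=\theta_i y+a y d_i\mathrm{E}[x(\theta,d)]-\frac{c}{2}y^2+\phi(n-1)\mathrm{E}[x(\theta,d)]$, and in the friend game $EU^{friend}(y;\theta_i,d_i;x)=\theta_i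 y+a y d_i\widetilde{\mathrm{E}}[x(\theta,d)]-\frac{c}{2}y^2+\phi(n-1)\mathrm{E}[x(\theta,d)]$. A Bayesian equilibrium of a game is a strategy $x$ such that for every $(\theta_i,d_i)$, $x(\theta_i,d_i)$ maximizes that game's payoff over $y\ge0$ given others use $x$. Under the standing assumptions each game has a unique Bayesian equilibrium; $x^{soc}$ denotes that of the society-wide game and $x^{friend}$ that of the friend game. *)

theory Defs
  imports "HOL-Probability.Probability"
begin

text \<open>Types theta are reals, degrees are naturals. P is a probability measure M on
  real \<times> nat (product of Borel and counting sigma-algebra) concentrated on Theta \<times> D.\<close>

definition Dset :: "nat \<Rightarrow> nat set" where
  "Dset n = {1..n-1}"

definition EP :: "(real \<times> nat) measure \<Rightarrow> (real \<times> nat \<Rightarrow> real) \<Rightarrow> real" where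
  "EP M h = (\<integral>z. h z \<partial>M)"

text \<open>Expectation under the neighbor distribution: E[d h]/E[d].\<close>
definition EN :: "(real \<times> nat) measure \<Rightarrow> (real \<times> nat \<Rightarrow> real) \<Rightarrow> real" where
  "EN M h = EP M (\<lambda>z. real (snd z) * h z) / EP M (\<lambda>z. real (snd z))"

definition EU_soc :: "(real \<times> nat) measure \<Rightarrow> nat \<Rightarrow> real \<Rightarrow> real \<Rightarrow> real
    \<Rightarrow> real \<Rightarrow> real \<Rightarrow> nat \<Rightarrow> (real \<times> nat \<Rightarrow> real) \<Rightarrow> real" where
  "EU_soc M n a c \<phi> y \<theta>i di x =
     \<theta>i * y + a * y * real di * EP M x - c / 2 * y\<^sup>2 + \<phi> * (real n - 1) * EP M x"

definition EU_friend :: "(real \<times> nat) measure \<Rightarrow> nat \<Rightarrow> real \<Rightarrow> real \<Rightarrow> real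
    \<Rightarrow> real \<Rightarrow> real \<Rightarrow> nat \<Rightarrow> (real \<times> nat \<Rightarrow> real) \<Rightarrow> real" where
  "EU_friend M n a c \<phi> y \<theta>i di x =
     \<theta>i * y + a * y * real di * EN M x - c / 2 * y\<^sup>2 + \<phi> * (real n - 1) * EP M x"

definition strategy :: "(real \<times> nat) measure \<Rightarrow> real set \<Rightarrow> nat \<Rightarrow> (real \<times> nat \<Rightarrow> real) \<Rightarrow> bool" where
  "strategy M \<Theta> n x \<longleftrightarrow> x \<in> borel_measurable M \<and>
     (\<exists>B. \<forall>z \<in> \<Theta> \<times> Dset n. \<bar>x z\<bar> \<le> B) \<and> (\<forall>z \<in> \<Theta> \<times> Dset n. 0 \<le> x z)"

definition bayes_eq :: "(real \<Rightarrow> real \<Rightarrow> nat \<Rightarrow> (real \<times> nat \<Rightarrow> real) \<Rightarrow> real)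
    \<Rightarrow> (real \<times> nat) measure \<Rightarrow> real set \<Rightarrow> nat \<Rightarrow> (real \<times> nat \<Rightarrow> real) \<Rightarrow> bool" where
  "bayes_eq EU M \<Theta> n x \<longleftrightarrow> strategy M \<Theta> n x \<and>
     (\<forall>\<theta>i \<in> \<Theta>. \<forall>di \<in> Dset n. \<forall>y \<ge> 0. EU y \<theta>i di x \<le> EU (x (\<theta>i, di)) \<theta>i di x)"

end

theory Submission
  imports Defs
begin

lemma opt_unique:
  fixes c B x :: real
  assumes c: "c > 0" and h: "B*(B/c) - c/2*(B/c)^2 \<le> B*x - c/2*x^2"
  shows "x = B/c"
proof -
  have e: "c/2*(x-B/c)^2 = (B*(B/c) - c/2*(B/c)^2) - (B*x - c/2*x^2)"
    using c by (simp add: field_simps power2_eq_square)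
  have "c/2*(x-B/c)^2 \<le> 0" using e h by linarith
  moreover have "c/2*(x-B/c)^2 \<ge> 0" using c by simp
  ultimately have "(x-B/c)^2 = 0" using c
    by (metis antisym divide_pos_pos mult_le_0_iff not_le zero_less_numeral zero_le_power2 mult_eq_0_iff)
  thus ?thesis by simp
qed

theorem proposition1:
  fixes n :: nat and a c \<phi> :: real and \<Theta> :: "real set"
    and M :: "(real \<times> nat) measure" and xs xf :: "real \<times> nat \<Rightarrow> real"
  assumes n: "n \<ge> 2" and a: "a > 0" and c: "c > 0"
    and \<Theta>: "compact \<Theta>" "\<Theta> \<subseteq> {0..}"
    and M: "prob_space M" "sets M = sets (borel \<Otimes>\<^sub>M count_space UNIV)"
    and supp: "measure M (\<Theta> \<times> Dset n) = 1"
    and pos: "measure M {z. fst z > 0} > 0"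
    and std: "c > a * EN M (\<lambda>z. real (snd z))"
    and var: "prob_space.variance M (\<lambda>z. real (snd z)) > 0"
    and theta: "EN M fst = EP M fst"
    and soc: "bayes_eq (EU_soc M n a c \<phi>) M \<Theta> n xs"
    and fr: "bayes_eq (EU_friend M n a c \<phi>) M \<Theta> n xf"
  shows "(\<forall>\<theta>i \<in> \<Theta>. \<forall>di \<in> Dset n. xf (\<theta>i, di) > xs (\<theta>i, di))
         \<and> EN M xf > EP M xf \<and> EP M xf > EP M xs"
proof -
  interpret P: prob_space M by (rule M(1))
  define S where "S = \<Theta> \<times> Dset n"
  have AES: "AE z in M. z \<in> S" using P.AE_prob_1 supp S_def by simp
  have meq: "borel_measurable M = borel_measurable (borel \<Otimes>\<^sub>M count_space UNIV)"
    by (rule measurable_cong_sets[OF M(2) refl])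
  have sp: "space M = UNIV" using sets_eq_imp_space_eq[OF M(2)] by (simp add: space_pair_measure)
  have mfst: "fst \<in> borel_measurable M" unfolding meq by measurable
  have msnd: "(\<lambda>z. real (snd z)) \<in> borel_measurable M" unfolding meq by measurable
  obtain B where B: "\<forall>t\<in>\<Theta>. \<bar>t\<bar> \<le> B"
    using compact_imp_bounded[OF \<Theta>(1)] by (auto simp: bounded_iff)
  have Sb: "\<And>z. z \<in> S \<Longrightarrow> 0 \<le> fst z \<and> fst z \<le> B \<and> 1 \<le> real (snd z) \<and> real (snd z) \<le> real n"
    using B \<Theta>(2) by (force simp: S_def Dset_def)
  have intb: "integrable M f" if "f \<in> borel_measurable M" "\<forall>z\<in>S. \<bar>f z\<bar> \<le> K" for f :: "_ \<Rightarrow> real" and K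
    using that AES by (intro P.integrable_const_bound[where B=K]) auto
  have ifst: "integrable M fst" using mfst by (rule intb[of _ B]) (use Sb in auto)
  have isnd: "integrable M (\<lambda>z. real (snd z))" using msnd by (rule intb[of _ "real n"]) (use Sb in auto)
  have isnd2: "integrable M (\<lambda>z. real (snd z) * real (snd z))"
    by (rule intb[of _ "real n * real n"]) (use msnd in simp, use Sb in \<open>auto intro!: mult_mono\<close>)
  have isndf: "integrable M (\<lambda>z. real (snd z) * fst z)"
    by (rule intb[of _ "real n * B"]) (use msnd mfst in simp, use Sb in \<open>auto simp: abs_mult intro!: mult_mono\<close>)

  have strat: "integrable M x \<and> integrable M (\<lambda>z. real (snd z) * x z) \<and> (\<forall>z\<in>S. 0 \<le> x z)"
    if "strategy M \<Theta> n x" for x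
  proof -
    from that obtain K where mx: "x \<in> borel_measurable M" and K: "\<forall>z\<in>S. \<bar>x z\<bar> \<le> K"
      and nn: "\<forall>z\<in>S. 0 \<le> x z" unfolding strategy_def S_def by blast
    have "integrable M x" using mx K by (rule intb)
    moreover have "integrable M (\<lambda>z. real (snd z) * x z)"
      by (rule intb[of _ "real n * K"]) (use msnd mx in simp, use Sb K in \<open>auto simp: abs_mult intro!: mult_mono\<close>)
    ultimately show ?thesis using nn by blast
  qed
  have ss: "strategy M \<Theta> n xs" and sf: "strategy M \<Theta> n xf"
    using soc fr unfolding bayes_eq_def by auto
  note xsI = strat[OF ss] and xfI = strat[OF sf]
  define ms where "ms = EP M xs"
  define mf where "mf = EN M xf"
  define \<mu> where "\<mu> = EP M fst"
  define e1 where "e1 = EP M (\<lambda>z. real (snd z))"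
  define e2 where "e2 = EP M (\<lambda>z. real (snd z) * real (snd z))"
  define etd where "etd = EP M (\<lambda>z. real (snd z) * fst z)"
  have e1: "e1 \<ge> 1"
  proof -
    have "integral\<^sup>L M (\<lambda>z. 1) \<le> integral\<^sup>L M (\<lambda>z. real (snd z))"
      by (rule integral_mono_AE) (use isnd AES Sb in auto)
    thus ?thesis by (simp add: e1_def EP_def P.prob_space)
  qed
  have ms0: "ms \<ge> 0" unfolding ms_def EP_def
    by (rule integral_nonneg_AE) (use AES xsI in auto)
  have mf0: "mf \<ge> 0" unfolding mf_def EN_def
    by (intro divide_nonneg_nonneg) (unfold EP_def, (rule integral_nonneg_AE, use AES xfI Sb in auto)+)
  have \<mu>pos: "\<mu> > 0"
  proof -
    have ae: "AE z in M. 0 \<le> fst z" using AES Sb by auto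
    have "\<mu> \<ge> 0" unfolding \<mu>_def EP_def by (rule integral_nonneg_AE[OF ae])
    moreover have "\<mu> \<noteq> 0"
    proof
      assume "\<mu> = 0"
      hence "AE z in M. fst z = 0" using integral_nonneg_eq_0_iff_AE[OF ifst ae] by (simp add: \<mu>_def EP_def)
      hence ae0: "AE z in M. \<not> fst z > 0" by auto
      have ev: "{z \<in> space M. 0 < fst z} \<in> sets M" using mfst by measurable
      hence ev': "{z. 0 < fst z} \<in> sets M" using sp by simp
      from ae0 have "emeasure M {z. fst z > 0} = 0"
        by (subst (asm) AE_iff_measurable[where N="{z. fst z > 0}"]) (use ev' sp in auto)
      thus False using pos by (simp add: measure_def)
    qed
    ultimately show ?thesis by simp
  qed
  have xs_eq: "\<forall>z\<in>S. xs z = (fst z + a * real (snd z) * ms)/c"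
  proof
    fix z assume "z \<in> S"
    then obtain \<theta>i di where z: "z = (\<theta>i, di)" "\<theta>i \<in> \<Theta>" "di \<in> Dset n" by (auto simp: S_def)
    define Bq where "Bq = \<theta>i + a * real di * ms"
    have "\<theta>i \<ge> 0" using z \<Theta>(2) by auto
    hence "Bq \<ge> 0" using a ms0 by (simp add: Bq_def)
    hence "Bq / c \<ge> 0" using c by simp
    hence "EU_soc M n a c \<phi> (Bq/c) \<theta>i di xs \<le> EU_soc M n a c \<phi> (xs (\<theta>i, di)) \<theta>i di xs"
      using soc z unfolding bayes_eq_def by blast
    moreover have "\<And>y. EU_soc M n a c \<phi> y \<theta>i di xs = Bq*y - c/2*y^2 + \<phi> * (real n - 1) * EP M xs"
      unfolding EU_soc_def ms_def Bq_def by (simp add: algebra_simps)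
    ultimately have "Bq*(Bq/c) - c/2*(Bq/c)^2 \<le> Bq*(xs (\<theta>i, di)) - c/2*(xs (\<theta>i, di))^2"
      by simp
    hence "xs (\<theta>i, di) = Bq / c" by (rule opt_unique[OF c])
    thus "xs z = (fst z + a * real (snd z) * ms)/c" using z by (simp add: Bq_def)
  qed
  have xf_eq: "\<forall>z\<in>S. xf z = (fst z + a * real (snd z) * mf)/c"
  proof
    fix z assume "z \<in> S"
    then obtain \<theta>i di where z: "z = (\<theta>i, di)" "\<theta>i \<in> \<Theta>" "di \<in> Dset n" by (auto simp: S_def)
    define Bq where "Bq = \<theta>i + a * real di * mf"
    have "\<theta>i \<ge> 0" using z \<Theta>(2) by auto
    hence "Bq \<ge> 0" using a mf0 by (simp add: Bq_def)
    hence "Bq / c \<ge> 0" using c by simp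
    hence "EU_friend M n a c \<phi> (Bq/c) \<theta>i di xf \<le> EU_friend M n a c \<phi> (xf (\<theta>i, di)) \<theta>i di xf"
      using fr z unfolding bayes_eq_def by blast
    moreover have "\<And>y. EU_friend M n a c \<phi> y \<theta>i di xf = Bq*y - c/2*y^2 + \<phi> * (real n - 1) * EP M xf"
      unfolding EU_friend_def mf_def Bq_def by (simp add: algebra_simps)
    ultimately have "Bq*(Bq/c) - c/2*(Bq/c)^2 \<le> Bq*(xf (\<theta>i, di)) - c/2*(xf (\<theta>i, di))^2"
      by simp
    hence "xf (\<theta>i, di) = Bq / c" by (rule opt_unique[OF c])
    thus "xf z = (fst z + a * real (snd z) * mf)/c" using z by (simp add: Bq_def)
  qed
  have ms_eq: "ms = (\<mu> + a * e1 * ms) / c"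
  proof -
    have "integral\<^sup>L M xs = integral\<^sup>L M (\<lambda>z. (fst z + a * real (snd z) * ms)/c)"
      by (rule integral_cong_AE) (use xs_eq AES xsI mfst msnd in \<open>auto intro: borel_measurable_integrable\<close>)
    hence "ms = integral\<^sup>L M (\<lambda>z. (fst z + a * real (snd z) * ms)/c)"
      by (simp add: ms_def EP_def)
    also have "\<dots> = (\<mu> + a * e1 * ms) / c"
      using ifst isnd by (simp add: \<mu>_def e1_def EP_def)
    finally show ?thesis .
  qed
  have mf_eq: "mf * e1 = (etd + a * e2 * mf) / c"
  proof -
    have "integral\<^sup>L M (\<lambda>z. real (snd z) * xf z) = integral\<^sup>L M (\<lambda>z. real (snd z) * ((fst z + a * real (snd z) * mf)/c))"
      by (rule integral_cong_AE) (use xf_eq AES xfI mfst msnd in \<open>auto intro: borel_measurable_integrable\<close>)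
    also have "\<dots> = integral\<^sup>L M (\<lambda>z. (real (snd z) * fst z + (a * mf) * (real (snd z) * real (snd z)))/c)"
      by (simp add: algebra_simps)
    also have "\<dots> = (etd + a * e2 * mf) / c"
      using isndf isnd2 by (simp add: etd_def e2_def EP_def)
    finally have "EP M (\<lambda>z. real (snd z) * xf z) = (etd + a * e2 * mf) / c" by (simp add: EP_def)
    moreover have "mf = EP M (\<lambda>z. real (snd z) * xf z) / e1" by (simp add: mf_def EN_def e1_def)
    ultimately show ?thesis using e1 by simp
  qed
  have EPxf: "EP M xf = (\<mu> + a * e1 * mf) / c"
  proof -
    have "integral\<^sup>L M xf = integral\<^sup>L M (\<lambda>z. (fst z + a * real (snd z) * mf)/c)"
      by (rule integral_cong_AE) (use xf_eq AES xfI mfst msnd in \<open>auto intro: borel_measurable_integrable\<close>)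
    also have "\<dots> = (\<mu> + a * e1 * mf) / c"
      using ifst isnd by (simp add: \<mu>_def e1_def EP_def)
    finally show ?thesis by (simp add: EP_def)
  qed
  have etd: "etd = \<mu> * e1" using theta e1 by (simp add: EN_def etd_def \<mu>_def e1_def field_simps)
  have std': "c * e1 > a * e2" using std e1 by (simp add: EN_def e2_def e1_def field_simps)
  have e2: "e2 > e1 * e1"
  proof -
    have "P.variance (\<lambda>z. real (snd z)) = P.expectation (\<lambda>z. (real (snd z))^2) - (P.expectation (\<lambda>z. real (snd z)))^2"
      by (rule P.variance_eq) (use isnd isnd2 in \<open>simp_all add: power2_eq_square\<close>)
    thus ?thesis using var by (simp add: e1_def e2_def EP_def power2_eq_square)
  qed
  have A1: "mf * (c * e1 - a * e2) = \<mu> * e1" using mf_eq etd c by (simp add: field_simps)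
  have A2: "ms * (c - a * e1) = \<mu>" using ms_eq c by (simp add: field_simps)
  have D1: "c * e1 - a * e2 > 0" using std' by simp
  have mfpos: "mf > 0"
  proof -
    have "mf * (c * e1 - a * e2) > 0" using A1 \<mu>pos e1 by simp
    thus ?thesis using D1 by (simp add: zero_less_mult_iff)
  qed
  have ae2: "a * e2 > a * (e1 * e1)" using a e2 by simp
  have D2: "c - a * e1 > 0"
  proof -
    have "c * e1 > (a * e1) * e1" using std' ae2 by (simp add: algebra_simps)
    thus ?thesis using e1 by simp
  qed
  have "(mf - ms) * (c - a * e1) * e1 = mf * (c * e1 - a * e2) + a * mf * (e2 - e1 * e1) - \<mu> * e1"
    using A2 by (simp add: algebra_simps)
  also have "\<dots> = a * mf * (e2 - e1 * e1)" using A1 by simp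
  also have "\<dots> > 0" using a mfpos e2 by simp
  finally have "(mf - ms) * ((c - a * e1) * e1) > 0" by (simp add: algebra_simps)
  moreover have "(c - a * e1) * e1 > 0" using D2 e1 by simp
  ultimately have mfms: "mf > ms" by (simp add: zero_less_mult_iff)
  have c1: "\<forall>\<theta>i \<in> \<Theta>. \<forall>di \<in> Dset n. xf (\<theta>i, di) > xs (\<theta>i, di)"
  proof (intro ballI)
    fix \<theta>i di assume h: "\<theta>i \<in> \<Theta>" "di \<in> Dset n"
    hence zS: "(\<theta>i, di) \<in> S" by (simp add: S_def)
    have "real di \<ge> 1" using Sb[OF zS] by simp
    hence "a * real di * ms < a * real di * mf" using a mfms by simp
    thus "xf (\<theta>i, di) > xs (\<theta>i, di)"
      using xs_eq xf_eq zS c by (simp add: divide_strict_right_mono)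
  qed
  have c2: "EN M xf > EP M xf"
  proof -
    have "mf * c * e1 = \<mu> * e1 + a * e2 * mf" using A1 by (simp add: algebra_simps)
    also have "\<dots> > \<mu> * e1 + a * (e1 * e1) * mf" using ae2 mfpos by (simp add: mult_strict_right_mono)
    finally have "(mf * c) * e1 > (\<mu> + a * e1 * mf) * e1" by (simp add: algebra_simps)
    hence "mf * c > \<mu> + a * e1 * mf" using e1 by simp
    hence "mf > (\<mu> + a * e1 * mf) / c" using c by (simp add: field_simps)
    thus ?thesis using EPxf by (simp add: mf_def)
  qed
  have c3: "EP M xf > EP M xs"
  proof -
    have "a * e1 * ms < a * e1 * mf" using a e1 mfms by simp
    hence "(\<mu> + a * e1 * ms) / c < (\<mu> + a * e1 * mf) / c" using c by (simp add: divide_strict_right_mono)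
    thus ?thesis using EPxf ms_eq by (simp add: ms_def)
  qed
  show ?thesis using c1 c2 c3 by blast
qed
end
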